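(* Let $1\le k<n$ and $A\in\mathbb{H}_n$. Suppose there is a unique rank-$k$ orthogonal projection $P$ with $|\operatorname{tr}(AP)|=w_k(A)$, and $w_k(A)=\operatorname{tr}(AP)$. Suppose $\mathcal{C}\subseteq\mathbb{H}_n$ is a convex cone of real affine dimension at least $k^2+(n-k)^2$ with $A\in\mathcal{C}\subseteq\mathcal{P}^{\mathbb{H}}(A)$. Then $\mathcal{C}\subseteq S^{\mathbb{H}}(P)$, and so its real affine dimension equals $k^2+(n-k)^2$.
   Context: $\mathbb{H}_n$ is the real space of $n\times n$ Hermitian matrices. $w_k(A)=\max\{|\operatorname{tr}(AP)|: P=P^*=P^2,\operatorname{tr}P=k\}$. For $A,B\in\mathbb{H}_n$, $A\parallel B$ means $w_k(A+\mu B)=w_k(A)+w_k(B)$ for some $\mu\in\{1,-1\}$, and $\mathcal{P}^{\mathbb{H}}(A)=\{B\in\mathbb{H}_n:B\parallel A\}$. For a rank-$k$ orthogonal projection $P$, $S^{\mathbb{H}}(P)=\{B\in\mathbb{H}_n:\operatorname{tr}(BP)=w_k(B)\}$. A convex cone is closed under nonnegative real linear combinations; its real affine dimension is the real dimension of its real span. *)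

theory Defs
  imports "HOL-Analysis.Analysis"
begin

text \<open>n x n complex matrices are modelled as complex^'n^'n with n = CARD('n).\<close>

definition cadj :: "complex^'n^'n \<Rightarrow> complex^'n^'n" where
  "cadj M = (\<chi> i j. cnj (M $ j $ i))"

definition Herm :: "(complex^'n^'n) set" where
  "Herm = {A. cadj A = A}"

definition is_proj :: "nat \<Rightarrow> complex^'n^'n \<Rightarrow> bool" where
  "is_proj k P \<longleftrightarrow> P = cadj P \<and> P = P ** P \<and> trace P = of_nat k"

definition wk :: "nat \<Rightarrow> complex^'n^'n \<Rightarrow> real" where
  "wk k A = Sup {cmod (trace (A ** P)) | P. is_proj k P}"

definition par :: "nat \<Rightarrow> complex^'n^'n \<Rightarrow> complex^'n^'n \<Rightarrow> bool" where
  "par k A B \<longleftrightarrow> (\<exists>\<mu>\<in>{1::real, -1}. wk k (A + \<mu> *\<^sub>R B) = wk k A + wk k B)"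

definition PH :: "nat \<Rightarrow> complex^'n^'n \<Rightarrow> (complex^'n^'n) set" where
  "PH k A = {B \<in> Herm. par k B A}"

definition SH :: "nat \<Rightarrow> complex^'n^'n \<Rightarrow> (complex^'n^'n) set" where
  "SH k P = {B \<in> Herm. trace (B ** P) = complex_of_real (wk k B)}"

definition convex_cone_set :: "'a::real_vector set \<Rightarrow> bool" where
  "convex_cone_set C \<longleftrightarrow>
     (\<forall>x\<in>C. \<forall>y\<in>C. \<forall>a b::real. a \<ge> 0 \<longrightarrow> b \<ge> 0 \<longrightarrow> a *\<^sub>R x + b *\<^sub>R y \<in> C)"

end

theory Submission
  imports Defs
begin


definition cinner :: "complex^'n \<Rightarrow> complex^'n \<Rightarrow> complex" where
  "cinner x y = (\<Sum>i\<in>UNIV. cnj (x$i) * y$i)"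
definition outer :: "complex^'n \<Rightarrow> complex^'n \<Rightarrow> complex^'n^'n" where
  "outer x y = (\<chi> i j. x$i * cnj (y$j))"
definition orthonormal :: "nat \<Rightarrow> (nat \<Rightarrow> complex^'n) \<Rightarrow> bool" where
  "orthonormal m u \<longleftrightarrow> (\<forall>a<m. \<forall>b<m. cinner (u a) (u b) = (if a = b then 1 else 0))"
definition projf :: "nat \<Rightarrow> (nat \<Rightarrow> complex^'n) \<Rightarrow> complex^'n^'n" where
  "projf m u = (\<Sum>a<m. outer (u a) (u a))"

lemma cinner_zero_right[simp]: "cinner x 0 = 0" by (simp add: cinner_def)
lemma cinner_zero_left[simp]: "cinner 0 x = 0" by (simp add: cinner_def)

lemma matrix_add_rdistrib: "(B + C) ** A = B ** A + C ** (A::complex^'n^'n)"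
  by (simp add: vec_eq_iff matrix_matrix_mult_def sum.distrib algebra_simps)

lemma trace_mult_outer: "trace (M ** outer x y) = cinner y (M *v x)"
  by (simp add: trace_def matrix_matrix_mult_def outer_def cinner_def matrix_vector_mult_def
      sum_distrib_left sum_distrib_right mult_ac)

lemma mult_outer: "M ** outer x y = outer (M *v x) y"
  by (simp add: vec_eq_iff matrix_matrix_mult_def outer_def matrix_vector_mult_def sum_distrib_right sum_distrib_left mult_ac)

lemma outer_mult: "outer x y ** M = outer x (cadj M *v y)"
  by (simp add: vec_eq_iff matrix_matrix_mult_def outer_def matrix_vector_mult_def cadj_def
      sum_distrib_left mult_ac)

lemma outer_mult_vec: "outer x y *v z = cinner y z *s x"
  by (simp add: vec_eq_iff outer_def matrix_vector_mult_def cinner_def sum_distrib_left sum_distrib_right mult_ac)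

lemma cadj_outer: "cadj (outer x y) = outer y x"
  by (simp add: vec_eq_iff outer_def cadj_def)

lemma cadj_cadj[simp]: "cadj (cadj A) = A"
  by (simp add: vec_eq_iff cadj_def)

lemma cadj_mult: "cadj (A ** B) = cadj B ** cadj A"
  by (simp add: vec_eq_iff matrix_matrix_mult_def cadj_def mult_ac)

lemma cadj_add: "cadj (A + B) = cadj A + cadj B"
  by (simp add: vec_eq_iff cadj_def)

lemma cadj_diff: "cadj (A - B) = cadj A - cadj B"
  by (simp add: vec_eq_iff cadj_def)

lemma cadj_scaleR: "cadj (c *\<^sub>R A) = c *\<^sub>R cadj A"
  by (simp add: vec_eq_iff cadj_def)

lemma cadj_sum: "cadj (sum f S) = sum (\<lambda>x. cadj (f x)) S"
  by (induct S rule: infinite_finite_induct) (auto simp: cadj_add vec_eq_iff cadj_def)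

lemma cadj_mat1[simp]: "cadj (mat 1) = mat 1"
  by (simp add: vec_eq_iff cadj_def mat_def)

lemma cinner_adj: "cinner x (M *v y) = cinner (cadj M *v x) y"
  by (simp add: cinner_def matrix_vector_mult_def cadj_def sum_distrib_left sum_distrib_right mult_ac,
   subst sum.swap, simp add: mult_ac)

lemma cnj_cinner: "cnj (cinner x y) = cinner y x"
  by (simp add: cinner_def mult_ac)

lemma cinner_add_right: "cinner x (y + z) = cinner x y + cinner x z"
  by (simp add: cinner_def algebra_simps sum.distrib)
lemma cinner_add_left: "cinner (x + y) z = cinner x z + cinner y z"
  by (simp add: cinner_def algebra_simps sum.distrib)
lemma cinner_diff_right: "cinner x (y - z) = cinner x y - cinner x z"
  by (simp add: cinner_def algebra_simps sum_subtractf)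
lemma cinner_diff_left: "cinner (x - y) z = cinner x z - cinner y z"
  by (simp add: cinner_def algebra_simps sum_subtractf)
lemma cinner_smult_right: "cinner x (c *s y) = c * cinner x y"
  by (simp add: cinner_def sum_distrib_left mult_ac)
lemma cinner_smult_left: "cinner (c *s x) y = cnj c * cinner x y"
  by (simp add: cinner_def sum_distrib_left mult_ac)
lemma cinner_sum_right: "cinner x (sum f S) = (\<Sum>a\<in>S. cinner x (f a))"
  by (induct S rule: infinite_finite_induct) (auto simp: cinner_add_right)
lemma cinner_sum_left: "cinner (sum f S) y = (\<Sum>a\<in>S. cinner (f a) y)"
  by (induct S rule: infinite_finite_induct) (auto simp: cinner_add_left)

lemma herm_cinner: assumes "X \<in> Herm" shows "cinner y (X *v x) = cnj (cinner x (X *v y))"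
proof -
  have "cinner y (X *v x) = cinner (cadj X *v y) x" by (rule cinner_adj)
  also have "... = cinner (X *v y) x" using assms by (simp add: Herm_def)
  finally show ?thesis by (simp add: cnj_cinner)
qed

lemma trace_comm: "trace (A ** B) = trace (B ** (A::complex^'n^'n))"
  by (simp add: trace_def matrix_matrix_mult_def, subst sum.swap, simp add: mult_ac)

lemma trace_add: "trace (A + B) = trace A + trace (B::complex^'n^'n)"
  by (simp add: trace_def sum.distrib)

lemma trace_sum: "trace (sum f S) = (\<Sum>a\<in>S. trace (f a :: complex^'n^'n))"
  by (induct S rule: infinite_finite_induct) (auto simp: trace_add, simp_all add: trace_def)

lemma matrix_mult_sum_right: "(M::complex^'n^'n) ** sum f S = (\<Sum>a\<in>S. M ** (f a :: complex^'n^'n))"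
  by (induct S rule: infinite_finite_induct) (auto simp: matrix_add_ldistrib)

lemma matrix_mult_sum_left: "sum f S ** (M::complex^'n^'n) = (\<Sum>a\<in>S. (f a :: complex^'n^'n) ** M)"
  by (induct S rule: infinite_finite_induct) (auto simp: matrix_add_rdistrib)

lemma trace_projf: "trace (X ** projf m u) = (\<Sum>a<m. cinner (u a) (X *v u a))"
  by (simp add: projf_def matrix_mult_sum_right trace_sum trace_mult_outer)



lemma matrix_vector_sum_left: "(sum f S) *v x = (\<Sum>a\<in>S. (f a :: complex^'n^'n) *v x)"
  by (induct S rule: infinite_finite_induct) (auto simp: matrix_vector_mult_add_rdistrib)

lemma projf_vec: "projf m u *v x = (\<Sum>a<m. cinner (u a) x *s u a)"
  by (simp add: projf_def matrix_vector_sum_left outer_mult_vec)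

lemma projf_fix: assumes "orthonormal m u" "b < m" shows "projf m u *v u b = u b"
proof -
  have "projf m u *v u b = (\<Sum>a<m. (if a = b then 1 else 0) *s u a)"
    unfolding projf_vec using assms by (intro sum.cong) (auto simp: orthonormal_def)
  also have "... = (\<Sum>a<m. if a = b then u b else 0)"
    by (intro sum.cong) auto
  also have "... = u b" using assms(2) by simp
  finally show ?thesis .
qed

lemma projf_perp: assumes "\<forall>a<m. cinner (u a) v = 0" shows "projf m u *v v = 0"
  unfolding projf_vec using assms by simp

lemma cadj_projf: "cadj (projf m u) = projf m u"
  by (simp add: projf_def cadj_sum cadj_outer)

lemma trace_outer: "trace (outer x y) = cinner y x"
  by (simp add: trace_def outer_def cinner_def mult_ac)

lemma projf_is_proj: assumes "orthonormal m u" shows "is_proj m (projf m u)"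
proof -
  have "projf m u ** projf m u = (\<Sum>b<m. projf m u ** outer (u b) (u b))"
    by (simp add: projf_def[of m u] matrix_mult_sum_right)
  also have "... = (\<Sum>b<m. outer (u b) (u b))"
    by (intro sum.cong) (auto simp: mult_outer projf_fix[OF assms])
  finally have 1: "projf m u ** projf m u = projf m u" by (simp add: projf_def)
  have "trace (projf m u) = (\<Sum>b<m. cinner (u b) (u b))"
    by (simp add: projf_def trace_sum trace_outer)
  also have "... = (\<Sum>b<m. 1)" using assms by (intro sum.cong) (auto simp: orthonormal_def)
  finally show ?thesis using 1 by (simp add: is_proj_def cadj_projf)
qed

lemma proj_diag: assumes "is_proj k Q"
  shows "Q $ j $ j = complex_of_real (\<Sum>l\<in>UNIV. (cmod (Q $ l $ j))^2)"
proof -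
  have eq: "Q = cadj Q ** Q" using assms unfolding is_proj_def by metis
  have "Q $ j $ j = (cadj Q ** Q) $ j $ j"
    using arg_cong[where f="\<lambda>M. M $ j $ j", OF eq] by (simp only:)
  also have "... = (\<Sum>l\<in>UNIV. cnj (Q $ l $ j) * Q $ l $ j)"
    by (simp add: cadj_def matrix_matrix_mult_def)
  also have "... = (\<Sum>l\<in>UNIV. complex_of_real ((cmod (Q $ l $ j))^2))"
    by (intro sum.cong refl) (metis complex_norm_square mult.commute)
  finally show ?thesis by simp
qed

lemma proj_entry_le1: assumes "is_proj k Q" shows "cmod (Q $ i $ j) \<le> 1"
proof -
  define r where "r = (\<Sum>l\<in>UNIV. (cmod (Q $ l $ j))^2)"
  have d: "Q $ j $ j = complex_of_real r" using proj_diag[OF assms] r_def by simp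
  have r0: "r \<ge> 0" unfolding r_def by (intro sum_nonneg) auto
  have le: "(cmod (Q $ l $ j))^2 \<le> r" for l
    unfolding r_def by (rule member_le_sum) auto
  from le[of j] d r0 have "r^2 \<le> r" by simp
  have "r \<le> 1"
  proof (rule ccontr)
    assume "\<not> r \<le> 1"
    then have "r * 1 < r * r" by (intro mult_strict_left_mono) auto
    then show False using \<open>r^2 \<le> r\<close> by (simp add: power2_eq_square)
  qed
  with le[of i] have "(cmod (Q $ i $ j))^2 \<le> 1" by linarith
  then show ?thesis by (simp add: power_le_one_iff abs_le_square_iff)
qed

definition bnd :: "complex^'n^'n \<Rightarrow> real" where
  "bnd A = (\<Sum>i\<in>UNIV. \<Sum>l\<in>UNIV. cmod (A $ i $ l))"

lemma trace_bound: assumes "is_proj k Q" shows "cmod (trace (A ** Q)) \<le> bnd A"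
proof -
  have "cmod (trace (A ** Q)) \<le> (\<Sum>i\<in>UNIV. cmod (\<Sum>l\<in>UNIV. A $ i $ l * Q $ l $ i))"
    unfolding trace_def matrix_matrix_mult_def by (simp add: norm_sum)
  also have "... \<le> (\<Sum>i\<in>UNIV. \<Sum>l\<in>UNIV. cmod (A $ i $ l * Q $ l $ i))"
    by (intro sum_mono norm_sum)
  also have "... \<le> bnd A" unfolding bnd_def
    by (intro sum_mono) (auto simp: norm_mult intro!: mult_left_le[OF proj_entry_le1[OF assms]])
  finally show ?thesis .
qed

lemma wk_bdd: "bdd_above {cmod (trace (A ** P)) | P. is_proj k P}"
  by (rule bdd_aboveI[of _ "bnd A"]) (auto intro: trace_bound)

lemma wk_ge: "is_proj k Q \<Longrightarrow> cmod (trace (A ** Q)) \<le> wk k A"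
  unfolding wk_def by (rule cSup_upper[OF _ wk_bdd]) auto

lemma wk_le: "is_proj k (P::complex^'n^'n) \<Longrightarrow> (\<And>Q. is_proj k Q \<Longrightarrow> cmod (trace ((A::complex^'n^'n) ** Q)) \<le> c) \<Longrightarrow> wk k A \<le> c"
  unfolding wk_def by (rule cSup_least) auto
lemma wk_nonneg: "is_proj k (P::complex^'n^'n) \<Longrightarrow> wk k (A::complex^'n^'n) \<ge> 0"
  using wk_ge[of k P A] by (meson norm_ge_zero order_trans)

lemma closed_proj: "closed {Q :: complex^'n^'n. is_proj k Q}"
proof -
  have c1: "continuous_on UNIV (\<lambda>Q::complex^'n^'n. cadj Q)"
    unfolding cadj_def by (intro continuous_on_vec_lambda continuous_on_cnj continuous_on_component continuous_on_id)
  have c2: "continuous_on UNIV (\<lambda>Q::complex^'n^'n. Q ** Q)"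
    unfolding matrix_matrix_mult_def
    by (intro continuous_on_vec_lambda continuous_on_sum continuous_on_mult continuous_on_component continuous_on_id)
  have c3: "continuous_on UNIV (\<lambda>Q::complex^'n^'n. trace Q)"
    unfolding trace_def by (intro continuous_on_sum continuous_on_component continuous_on_id)
  have "{Q :: complex^'n^'n. is_proj k Q} =
      {Q. Q = cadj Q} \<inter> {Q. Q = Q ** Q} \<inter> {Q. trace Q = of_nat k}"
    by (auto simp: is_proj_def)
  moreover have "closed {Q :: complex^'n^'n. Q = cadj Q}"
    by (rule closed_Collect_eq) (auto intro: continuous_intros c1)
  moreover have "closed {Q :: complex^'n^'n. Q = Q ** Q}"
    by (rule closed_Collect_eq) (auto intro: continuous_intros c2)
  moreover have "closed {Q :: complex^'n^'n. trace Q = of_nat k}"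
    by (rule closed_Collect_eq) (auto intro: continuous_intros c3)
  ultimately show ?thesis by (simp add: closed_Int)
qed

lemma norm_vec_le_sum: "norm (x::'a::real_normed_vector^'n) \<le> (\<Sum>i\<in>UNIV. norm (x $ i))"
  unfolding norm_vec_def by (rule L2_set_le_sum) auto

lemma bounded_proj: "bounded {Q :: complex^'n^'n. is_proj k Q}"
proof -
  have "norm Q \<le> real CARD('n) * real CARD('n)" if "is_proj k Q" for Q :: "complex^'n^'n"
  proof -
    have "norm Q \<le> (\<Sum>i\<in>UNIV. norm (Q $ i))" by (rule norm_vec_le_sum)
    also have "... \<le> (\<Sum>i\<in>(UNIV::'n set). \<Sum>j\<in>(UNIV::'n set). norm (Q $ i $ j))"
      by (intro sum_mono norm_vec_le_sum)
    also have "... \<le> (\<Sum>i\<in>(UNIV::'n set). \<Sum>j\<in>(UNIV::'n set). 1)"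
      by (intro sum_mono proj_entry_le1[OF that])
    finally show ?thesis by simp
  qed
  then show ?thesis unfolding bounded_iff by blast
qed

lemma wk_attained: fixes P B :: "complex^'n^'n" assumes "is_proj k P"
  shows "\<exists>Q. is_proj k Q \<and> cmod (trace (B ** Q)) = wk k B"
proof -
  have cpt: "compact {Q :: complex^'n^'n. is_proj k Q}"
    using closed_proj bounded_proj compact_eq_bounded_closed by blast
  have cont: "continuous_on {Q :: complex^'n^'n. is_proj k Q} (\<lambda>Q. cmod (trace (B ** Q)))"
    unfolding trace_def matrix_matrix_mult_def vec_lambda_beta
    by (intro continuous_on_norm continuous_on_sum continuous_on_mult continuous_on_const continuous_on_component continuous_on_id)
  obtain Q where Q: "is_proj k Q" "\<And>Q'. is_proj k Q' \<Longrightarrow> cmod (trace (B ** Q')) \<le> cmod (trace (B ** Q))"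
    using continuous_attains_sup[OF cpt _ cont] assms by blast
  have "wk k B = cmod (trace (B ** Q))"
    unfolding wk_def by (rule cSup_eq_maximum) (use Q in auto)
  then show ?thesis using Q by auto
qed



lemma cinner_self: "cinner x x = complex_of_real (\<Sum>i\<in>UNIV. (cmod (x $ i))^2)"
  unfolding cinner_def of_real_sum
  by (intro sum.cong refl) (metis complex_norm_square mult.commute)

lemma cinner_self_pos: assumes "x \<noteq> 0" shows "Re (cinner x x) > 0"
proof -
  obtain i where "x $ i \<noteq> 0" using assms by (auto simp: vec_eq_iff)
  then have "0 < (cmod (x $ i))^2" by simp
  also have "... \<le> (\<Sum>i\<in>UNIV. (cmod (x $ i))^2)" by (rule member_le_sum) auto
  finally show ?thesis by (simp add: cinner_self)
qed

lemma normalize_unit: assumes "x \<noteq> 0"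
  shows "cinner (complex_of_real (1 / sqrt (Re (cinner x x))) *s x)
                (complex_of_real (1 / sqrt (Re (cinner x x))) *s x) = 1"
proof -
  define s where "s = Re (cinner x x)"
  have s: "s > 0" using cinner_self_pos[OF assms] s_def by simp
  have cx: "cinner x x = complex_of_real s" unfolding s_def by (simp add: cinner_self)
  have r: "(1 / sqrt s) * (1 / sqrt s) * s = 1"
  proof -
    have "sqrt s * sqrt s = s" using s by simp
    then show ?thesis using s by (simp add: field_simps)
  qed
  have "cinner (complex_of_real (1 / sqrt s) *s x) (complex_of_real (1 / sqrt s) *s x)
        = complex_of_real ((1 / sqrt s) * (1 / sqrt s) * s)"
    unfolding cinner_smult_left cinner_smult_right cx
    by (simp only: complex_cnj_complex_of_real of_real_mult mult.assoc)
  then show ?thesis using r s_def by simp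
qed

lemma orthonormal_le_card: assumes "orthonormal j (u::nat \<Rightarrow> complex^'n)" shows "j \<le> CARD('n)"
proof -
  define R where "R = projf j u"
  have R: "is_proj j R" unfolding R_def by (rule projf_is_proj[OF assms])
  have "real j = Re (trace R)" using R by (simp add: is_proj_def)
  also have "... = (\<Sum>i\<in>UNIV. Re (R $ i $ i))" by (simp add: trace_def)
  also have "... \<le> (\<Sum>i\<in>(UNIV::'n set). 1)"
    by (intro sum_mono) (meson complex_Re_le_cmod order_trans proj_entry_le1[OF R])
  finally show ?thesis by simp
qed

lemma QR_eq: assumes "\<forall>a<j. Q *v u a = u a" shows "Q ** projf j u = projf j u"
  by (simp add: projf_def matrix_mult_sum_right mult_outer assms)

lemma proj_basis:
  fixes Q :: "complex^'n^'n"
  assumes Q: "is_proj m Q"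
  shows "\<exists>u. orthonormal m u \<and> Q = projf m u"
proof -
  define good where "good j \<longleftrightarrow> (\<exists>u. orthonormal j u \<and> (\<forall>a<j. Q *v u a = u a))" for j
  have g0: "good 0" by (auto simp: good_def orthonormal_def)
  have gb: "good j \<Longrightarrow> j \<le> CARD('n)" for j
    unfolding good_def using orthonormal_le_card by blast
  define j0 where "j0 = (GREATEST j. good j)"
  have gj0: "good j0" unfolding j0_def by (rule GreatestI_nat[where P=good, OF g0]) (use gb in auto)
  have maxj0: "good j \<Longrightarrow> j \<le> j0" for j unfolding j0_def by (rule Greatest_le_nat) (use gb in auto)
  obtain u where u: "orthonormal j0 u" "\<forall>a<j0. Q *v u a = u a" using gj0 good_def by blast
  define R where "R = projf j0 u"
  have QQ: "Q ** Q = Q" using Q by (simp add: is_proj_def)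
  have QH: "cadj Q = Q" using Q by (simp add: is_proj_def)
  have QR: "Q ** R = R" unfolding R_def by (rule QR_eq[OF u(2)])
  have RH: "cadj R = R" unfolding R_def by (rule cadj_projf)
  have key: "R *v (Q *v y) = Q *v y" for y
  proof (rule ccontr)
    assume ne: "R *v (Q *v y) \<noteq> Q *v y"
    define z where "z = Q *v y"
    define x where "x = z - R *v z"
    have xne: "x \<noteq> 0" using ne unfolding x_def z_def by simp
    have Qz: "Q *v z = z" unfolding z_def by (simp add: matrix_vector_mul_assoc QQ)
    have QRz: "Q *v (R *v z) = R *v z" by (simp add: matrix_vector_mul_assoc QR)
    have Qx: "Q *v x = x" unfolding x_def by (simp add: matrix_vector_mult_diff_distrib Qz QRz)
    have ox: "cinner (u b) x = 0" if "b < j0" for b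
    proof -
      have "cinner (u b) (R *v z) = cinner (R *v u b) z" using cinner_adj[of "u b" R z] RH by simp
      also have "R *v u b = u b" unfolding R_def by (rule projf_fix[OF u(1) that])
      finally show ?thesis unfolding x_def by (simp add: cinner_diff_right)
    qed
    define x' where "x' = complex_of_real (1 / sqrt (Re (cinner x x))) *s x"
    have x'1: "cinner x' x' = 1" unfolding x'_def by (rule normalize_unit[OF xne])
    have ox': "cinner (u b) x' = 0" if "b < j0" for b
      unfolding x'_def cinner_smult_right using ox[OF that] by simp
    have Qx': "Q *v x' = x'" unfolding x'_def
      by (simp add: vector_scalar_commute Qx)
    define u' where "u' = u(j0 := x')"
    have "orthonormal (Suc j0) u'"
      unfolding orthonormal_def
    proof (intro allI impI)
      fix a b assume a: "a < Suc j0" and b: "b < Suc j0"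
      show "cinner (u' a) (u' b) = (if a = b then 1 else 0)"
      proof (cases "a = j0"; cases "b = j0")
        assume "a = j0" "b = j0" then show ?thesis using x'1 by (simp add: u'_def)
      next
        assume "a = j0" "b \<noteq> j0"
        then have "cinner (u' a) (u' b) = cnj (cinner (u b) x')" by (simp add: u'_def cnj_cinner)
        then show ?thesis using ox'[of b] \<open>b \<noteq> j0\<close> b \<open>a = j0\<close> by simp
      next
        assume "a \<noteq> j0" "b = j0"
        then show ?thesis using ox'[of a] a by (simp add: u'_def)
      next
        assume "a \<noteq> j0" "b \<noteq> j0"
        then show ?thesis using u(1) a b by (simp add: u'_def orthonormal_def)
      qed
    qed
    moreover have "\<forall>a<Suc j0. Q *v u' a = u' a"
      using u(2) Qx' by (auto simp: u'_def less_Suc_eq)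
    ultimately have "good (Suc j0)" unfolding good_def by blast
    then show False using maxj0 by fastforce
  qed
  have "R ** Q = Q" unfolding matrix_eq by (simp add: matrix_vector_mul_assoc[symmetric] key)
  then have "cadj Q ** cadj R = cadj Q" by (metis cadj_mult)
  then have QR2: "Q = R" using QR QH RH by simp
  have "of_nat m = trace Q" using Q by (simp add: is_proj_def)
  also have "... = of_nat j0" unfolding QR2 R_def using projf_is_proj[OF u(1)] by (simp add: is_proj_def)
  finally have "m = j0" by simp
  then show ?thesis using u(1) QR2 R_def by blast
qed



lemma expand_quad:
  fixes X :: "complex^'n^'n"
  assumes XH: "X \<in> Herm"
  shows "cinner (p + z *s q) (X *v (p + z *s q)) =
     cinner p (X *v p) + z * cinner p (X *v q) + cnj z * cnj (cinner p (X *v q)) + cnj z * z * cinner q (X *v q)"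
proof -
  have h: "cinner q (X *v p) = cnj (cinner p (X *v q))" by (rule herm_cinner[OF XH])
  show ?thesis
    by (simp add: matrix_vector_right_distrib vector_scalar_commute cinner_add_left cinner_add_right
        cinner_smult_left cinner_smult_right h algebra_simps)
qed

lemma expand_norm:
  assumes "cinner p q = 0"
  shows "cinner (p + z *s q) (p + z *s q) = cinner p p + cnj z * z * cinner q q"
proof -
  have "cinner q p = 0" using assms cnj_cinner[of p q] by simp
  then show ?thesis using assms
    by (simp add: cinner_add_left cinner_add_right cinner_smult_left cinner_smult_right algebra_simps)
qed

lemma scale_quad: "cinner (complex_of_real c *s x) (X *v (complex_of_real c *s x)) =
   complex_of_real (c * c) * cinner x (X *v x)"
  by (simp add: vector_scalar_commute cinner_smult_left cinner_smult_right)

lemma sum_update_at: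
  fixes k :: nat
  assumes "a < k"
  shows "(\<Sum>b<k. f ((u(a := w)) b)) = (\<Sum>b<k. f (u b)) - f (u a) + (f w :: complex)"
proof -
  have "(\<Sum>b<k. f ((u(a := w)) b)) = f w + (\<Sum>b\<in>{..<k} - {a}. f ((u(a := w)) b))"
    using assms by (subst sum.remove[of _ a]) auto
  also have "(\<Sum>b\<in>{..<k} - {a}. f ((u(a := w)) b)) = (\<Sum>b\<in>{..<k} - {a}. f (u b))"
    by (intro sum.cong) auto
  also have "... = (\<Sum>b<k. f (u b)) - f (u a)"
  proof -
    have "(\<Sum>b<k. f (u b)) = f (u a) + (\<Sum>b\<in>{..<k} - {a}. f (u b))"
      by (rule sum.remove) (use assms in auto)
    then show ?thesis by simp
  qed
  finally show ?thesis by simp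
qed

lemma core:
  fixes X :: "complex^'n^'n" and u :: "nat \<Rightarrow> complex^'n"
  assumes XH: "X \<in> Herm" and ou: "orthonormal k u" and ak: "a < k"
    and vv: "cinner v v = 1" and vperp: "\<forall>b<k. cinner (u b) v = 0"
    and mx: "\<forall>u'. orthonormal k u' \<longrightarrow>
        Re (\<Sum>b<k. cinner (u' b) (X *v u' b)) \<le> Re (\<Sum>b<k. cinner (u b) (X *v u b))"
  shows "cinner (u a) (X *v v) = 0"
proof (rule ccontr)
  assume gne: "cinner (u a) (X *v v) \<noteq> 0"
  define \<gamma> where "\<gamma> = cinner (u a) (X *v v)"
  define g where "g = (cmod \<gamma>)^2"
  have g: "g > 0" using gne by (simp add: g_def \<gamma>_def)
  have gg: "cnj \<gamma> * \<gamma> = complex_of_real g" "\<gamma> * cnj \<gamma> = complex_of_real g"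
    unfolding g_def by (metis complex_norm_square mult.commute)+
  define \<alpha> where "\<alpha> = Re (cinner (u a) (X *v u a))"
  define \<beta> where "\<beta> = Re (cinner v (X *v v))"
  define t where "t = 1 / (\<bar>\<alpha> - \<beta>\<bar> + 1)"
  have t: "t > 0" unfolding t_def by (simp add: add_pos_nonneg)
  have t1: "t * (\<alpha> - \<beta>) < 1"
  proof -
    have "t * (\<alpha> - \<beta>) \<le> t * \<bar>\<alpha> - \<beta>\<bar>" using t by (intro mult_left_mono) auto
    also have "... < 1" unfolding t_def by (simp add: field_simps)
    finally show ?thesis .
  qed
  define z where "z = complex_of_real t * cnj \<gamma>"
  define w where "w = u a + z *s v"
  have pa: "cinner (u a) v = 0" using vperp ak by simp
  have ua1: "cinner (u a) (u a) = 1" using ou ak by (simp add: orthonormal_def)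
  have zz: "cnj z * z = complex_of_real (t * t * g)"
    unfolding z_def by (simp add: gg(2)[symmetric] mult_ac)
  have ww: "cinner w w = complex_of_real (1 + t * t * g)"
    unfolding w_def by (simp add: expand_norm[OF pa] ua1 vv zz)
  define r where "r = 1 + t * t * g"
  have r: "r > 0" unfolding r_def using t g by (simp add: add_pos_nonneg)
  have wne: "w \<noteq> 0"
  proof
    assume "w = 0"
    then have "complex_of_real r = 0" using ww r_def by simp
    then show False using r by simp
  qed
  have Rew: "Re (cinner w w) = r" using ww r_def by simp
  define w' where "w' = complex_of_real (1 / sqrt r) *s w"
  have w'1: "cinner w' w' = 1" unfolding w'_def using normalize_unit[OF wne] Rew by simp
  have zg: "z * \<gamma> = complex_of_real (t * g)" "cnj z * cnj \<gamma> = complex_of_real (t * g)"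
    unfolding z_def by (simp_all add: gg mult_ac)
  have Fw: "Re (cinner w (X *v w)) = \<alpha> + 2 * t * g + t * t * g * \<beta>"
    unfolding w_def expand_quad[OF XH] \<gamma>_def[symmetric] zg zz \<alpha>_def \<beta>_def by simp
  have Fw': "Re (cinner w' (X *v w')) = (\<alpha> + 2 * t * g + t * t * g * \<beta>) / r"
  proof -
    have "sqrt r * sqrt r = r" using r by simp
    then have "1 / sqrt r * (1 / sqrt r) = 1 / r" by (simp add: field_simps)
    then show ?thesis unfolding w'_def scale_quad using Fw
      by (simp del: of_real_mult add: of_real_mult[symmetric])
  qed
  define u' where "u' = u(a := w')"
  have ow: "cinner (u b) w' = 0" if "b < k" "b \<noteq> a" for b
  proof -
    have "cinner (u b) w = 0" unfolding w_def
      using ou that ak vperp by (simp add: cinner_add_right cinner_smult_right orthonormal_def)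
    then show ?thesis unfolding w'_def by (simp add: cinner_smult_right)
  qed
  have ou': "orthonormal k u'"
    unfolding orthonormal_def
  proof (intro allI impI)
    fix b c assume b: "b < k" and c: "c < k"
    show "cinner (u' b) (u' c) = (if b = c then 1 else 0)"
    proof (cases "b = a"; cases "c = a")
      assume "b = a" "c = a" then show ?thesis using w'1 by (simp add: u'_def)
    next
      assume "b = a" "c \<noteq> a"
      then have "cinner (u' b) (u' c) = cnj (cinner (u c) w')" by (simp add: u'_def cnj_cinner)
      then show ?thesis using ow[of c] \<open>c \<noteq> a\<close> c \<open>b = a\<close> by simp
    next
      assume "b \<noteq> a" "c = a"
      then show ?thesis using ow[of b] b by (simp add: u'_def)
    next
      assume "b \<noteq> a" "c \<noteq> a"
      then show ?thesis using ou b c by (simp add: u'_def orthonormal_def)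
    qed
  qed
  have "Re (\<Sum>b<k. cinner (u' b) (X *v u' b)) \<le> Re (\<Sum>b<k. cinner (u b) (X *v u b))"
    using mx ou' by blast
  moreover have "(\<Sum>b<k. cinner (u' b) (X *v u' b)) =
      (\<Sum>b<k. cinner (u b) (X *v u b)) - cinner (u a) (X *v u a) + cinner w' (X *v w')"
    unfolding u'_def by (rule sum_update_at[OF ak])
  ultimately have "Re (cinner w' (X *v w')) \<le> \<alpha>" unfolding \<alpha>_def by simp
  then have "\<alpha> + 2 * t * g + t * t * g * \<beta> \<le> \<alpha> * r" using Fw' r by (simp add: divide_le_eq)
  then have "2 * t * g \<le> t * g * (t * (\<alpha> - \<beta>))" unfolding r_def by (simp add: algebra_simps)
  moreover have "t * g * (t * (\<alpha> - \<beta>)) < t * g * 2"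
    using t1 t g by (intro mult_strict_left_mono) auto
  ultimately show False by simp
qed



lemma cinner_axis_left: "cinner (axis l 1) y = y $ l"
  unfolding cinner_def axis_def
  by (subst sum.cong[OF refl, where h="\<lambda>i. if i = l then y$i else 0"]) auto
lemma cinner_axis_right: "cinner y (axis l 1) = cnj (y $ l)"
  unfolding cinner_def axis_def
  by (subst sum.cong[OF refl, where h="\<lambda>i. if i = l then cnj (y$i) else 0"]) auto
lemma axis_comp: "axis l c $ m = (if m = l then c else 0)"
  by (simp add: axis_def)
lemma mv_axis: "(W *v axis j 1) $ i = W $ i $ j"
  by (simp add: matrix_vector_mult_def axis_def if_distrib cong: if_cong)

definition fam :: "complex^'n \<Rightarrow> (nat \<Rightarrow> 'n) \<Rightarrow> nat \<Rightarrow> complex^'n" where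
  "fam x g = (\<lambda>a. if a = 0 then x else axis (g (a - 1)) 1)"

lemma exists_g:
  fixes i j :: 'n
  assumes "k < CARD('n)" "i \<noteq> j"
  shows "\<exists>g. inj_on g {..<k-1} \<and> g ` {..<k-1} \<subseteq> UNIV - {i,j}"
proof -
  have "card (UNIV - {i,j}) = CARD('n) - 2" using assms(2) by (simp add: card_Diff_subset)
  then have "k - 1 \<le> card (UNIV - {i,j})" using assms(1) by simp
  then obtain T where T: "T \<subseteq> UNIV - {i,j}" "card T = k - 1" "finite T"
    by (rule obtain_subset_with_card_n)
  obtain h where "bij_betw h {0..<card T} T" using ex_bij_betw_nat_finite[OF T(3)] by blast
  then have "inj_on h {..<k-1}" "h ` {..<k-1} = T" using T(2)
    by (auto simp: bij_betw_def lessThan_atLeast0)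
  then show ?thesis using T(1) by blast
qed

lemma fam_orth:
  assumes g: "inj_on g {..<k-1}" "g ` {..<k-1} \<subseteq> UNIV - {i,j}"
    and x: "cinner x x = 1" "\<forall>l. l \<noteq> i \<and> l \<noteq> j \<longrightarrow> x $ l = 0"
  shows "orthonormal k (fam x g)"
  unfolding orthonormal_def
proof (intro allI impI)
  fix a b assume a: "a < k" and b: "b < k"
  have gx: "x $ g m = 0" if "m < k - 1" for m using g(2) x(2) that by auto
  show "cinner (fam x g a) (fam x g b) = (if a = b then 1 else 0)"
  proof (cases "a = 0"; cases "b = 0")
    assume "a = 0" "b = 0" then show ?thesis using x by (simp add: fam_def)
  next
    assume "a = 0" "b \<noteq> 0" then show ?thesis using gx[of "b-1"] b
      by (simp add: fam_def cinner_axis_right)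
  next
    assume "a \<noteq> 0" "b = 0" then show ?thesis using gx[of "a-1"] a
      by (simp add: fam_def cinner_axis_left)
  next
    assume "a \<noteq> 0" "b \<noteq> 0"
    then have "g (a - 1) = g (b - 1) \<longleftrightarrow> a = b" using g(1) a b
      by (auto dest: inj_onD)
    then show ?thesis using \<open>a \<noteq> 0\<close> \<open>b \<noteq> 0\<close> by (simp add: fam_def cinner_axis_left axis_comp)
  qed
qed

lemma fam_perp:
  assumes g: "g ` {..<k-1} \<subseteq> UNIV - {i,j}"
    and v: "cinner x v = 0" "\<forall>l. l \<noteq> i \<and> l \<noteq> j \<longrightarrow> v $ l = 0"
  shows "\<forall>b<k. cinner (fam x g b) v = 0"
proof (intro allI impI)
  fix b assume b: "b < k"
  show "cinner (fam x g b) v = 0"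
  proof (cases "b = 0")
    case True then show ?thesis using v by (simp add: fam_def)
  next
    case False
    then have "g (b - 1) \<in> g ` {..<k-1}" using b by auto
    then have "g (b - 1) \<noteq> i \<and> g (b - 1) \<noteq> j" using g by blast
    then show ?thesis using False v by (simp add: fam_def cinner_axis_left)
  qed
qed

lemma fam_sum:
  fixes k :: nat
  assumes "1 \<le> k"
  shows "(\<Sum>a<k. F (fam x g a)) = F x + (\<Sum>m<k-1. F (axis (g m) 1))"
proof -
  obtain k' where k: "k = Suc k'" using assms by (cases k) auto
  show ?thesis unfolding k lessThan_atLeast0 sum.atLeast0_lessThan_Suc_shift by (simp add: fam_def)
qed



lemma exists_other: fixes i :: 'n assumes "2 \<le> CARD('n)" shows "\<exists>j. j \<noteq> i"
proof (rule ccontr)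
  assume "\<not> (\<exists>j. j \<noteq> i)"
  then have "(UNIV::'n set) = {i}" by auto
  then have "card (UNIV::'n set) = card {i}" by (rule arg_cong)
  then show False using assms by simp
qed

lemma axis_unit: "cinner (axis i 1) (axis i (1::complex)) = 1"
  by (simp add: cinner_axis_left)

lemma axis_off: "\<forall>l. l \<noteq> i \<and> l \<noteq> j \<longrightarrow> axis i (1::complex) $ l = 0"
  by (simp add: axis_comp)
lemma axis_off2: "\<forall>l. l \<noteq> i \<and> l \<noteq> j \<longrightarrow> axis j (1::complex) $ l = 0"
  by (simp add: axis_comp)

lemma wk_zero:
  fixes W P :: "complex^'n^'n"
  assumes P: "is_proj k P" and k1: "1 \<le> k" and kn: "k < CARD('n)"
    and WH: "W \<in> Herm" and w0: "wk k W = 0"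
  shows "W = 0"
proof -
  have S0: "(\<Sum>a<k. cinner (u a) (W *v u a)) = 0" if "orthonormal k u" for u
  proof -
    have "cmod (trace (W ** projf k u)) \<le> 0" using wk_ge[OF projf_is_proj[OF that], of W] w0 by simp
    then show ?thesis by (simp add: trace_projf)
  qed
  have cr: "cinner (u a) (W *v v) = 0"
    if "orthonormal k u" "a < k" "cinner v v = 1" "\<forall>b<k. cinner (u b) v = 0" for u a v
    by (rule core[OF WH that]) (use S0 that in simp)
  have off: "W $ i $ j = 0" if ij: "i \<noteq> j" for i j
  proof -
    obtain g where g: "inj_on g {..<k-1}" "g ` {..<k-1} \<subseteq> UNIV - {i,j}"
      using exists_g[OF kn ij] by blast
    have o: "orthonormal k (fam (axis i 1) g)" by (rule fam_orth[OF g axis_unit axis_off])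
    have p: "\<forall>b<k. cinner (fam (axis i 1) g b) (axis j 1) = 0"
      by (rule fam_perp[OF g(2) _ axis_off2]) (use ij in \<open>simp add: cinner_axis_left axis_comp\<close>)
    have "cinner (fam (axis i 1) g 0) (W *v axis j 1) = 0"
      by (rule cr[OF o _ axis_unit p]) (use k1 in simp)
    then show ?thesis by (simp add: fam_def cinner_axis_left mv_axis)
  qed
  have dg: "W $ i $ i = W $ j $ j" if ij: "i \<noteq> j" for i j
  proof -
    obtain g where g: "inj_on g {..<k-1}" "g ` {..<k-1} \<subseteq> UNIV - {i,j}"
      using exists_g[OF kn ij] by blast
    define c where "c = complex_of_real (1 / sqrt 2)"
    have cc: "cnj c * c = 1/2"
    proof -
      have "cnj c * c = complex_of_real (1 / sqrt 2 * (1 / sqrt 2))" unfolding c_def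
        by (simp only: complex_cnj_complex_of_real of_real_mult)
      also have "1 / sqrt 2 * (1 / sqrt 2) = (1/2::real)" by (simp add: field_simps)
      finally show ?thesis by simp
    qed
    define e where "e = axis i 1 + axis j (1::complex)"
    define d where "d = axis i 1 - axis j (1::complex)"
    have ee: "cinner e e = 2" using ij
      by (simp add: e_def cinner_add_left cinner_axis_left axis_comp)
    have ed: "cinner e d = 0" using ij
      by (simp add: e_def d_def cinner_add_left cinner_axis_left axis_comp)
    have x1: "cinner (c *s e) (c *s e) = 1"
    proof -
      have "cinner (c *s e) (c *s e) = (cnj c * c) * cinner e e"
        by (simp add: cinner_smult_left cinner_smult_right mult.assoc)
      then show ?thesis using cc ee by simp
    qed
    have xv: "cinner (c *s e) (c *s d) = 0"
      by (simp add: cinner_smult_left cinner_smult_right ed)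
    have xo: "\<forall>l. l \<noteq> i \<and> l \<noteq> j \<longrightarrow> (c *s e) $ l = 0"
      by (simp add: e_def axis_comp)
    have vo: "\<forall>l. l \<noteq> i \<and> l \<noteq> j \<longrightarrow> (c *s d) $ l = 0"
      by (simp add: d_def axis_comp)
    have o: "orthonormal k (fam (c *s e) g)" by (rule fam_orth[OF g x1 xo])
    have p: "\<forall>b<k. cinner (fam (c *s e) g b) (c *s d) = 0"
      by (rule fam_perp[OF g(2) xv vo])
    have vv: "cinner (c *s d) (c *s d) = 1"
    proof -
      have "cinner d d = 2" using ij by (simp add: d_def cinner_diff_left cinner_axis_left axis_comp)
      moreover have "cinner (c *s d) (c *s d) = (cnj c * c) * cinner d d"
        by (simp add: cinner_smult_left cinner_smult_right mult.assoc)
      ultimately show ?thesis using cc by simp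
    qed
    have "cinner (fam (c *s e) g 0) (W *v (c *s d)) = 0"
      by (rule cr[OF o _ vv p]) (use k1 in simp)
    then have "cnj c * c * cinner e (W *v d) = 0"
      by (simp add: fam_def vector_scalar_commute cinner_smult_left cinner_smult_right mult.assoc)
    then have "cinner e (W *v d) = 0" using cc by simp
    moreover have "cinner e (W *v d) = W $ i $ i - W $ j $ j"
    proof -
      have "cinner e (W *v d) = (W *v d) $ i + (W *v d) $ j"
        by (simp add: e_def cinner_add_left cinner_axis_left)
      also have "... = W $ i $ i - W $ i $ j + (W $ j $ i - W $ j $ j)"
        by (simp add: d_def matrix_vector_mult_diff_distrib mv_axis)
      finally show ?thesis using off[OF ij] off[of j i] ij by simp
    qed
    ultimately show ?thesis by simp
  qed
  obtain i0 :: 'n where True by simp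
  have n2: "2 \<le> CARD('n)" using k1 kn by simp
  obtain j0 where ij0: "j0 \<noteq> i0" using exists_other[OF n2] by blast
  have dc: "W $ l $ l = W $ i0 $ i0" for l by (cases "l = i0") (auto intro: dg)
  obtain g where g: "inj_on g {..<k-1}" "g ` {..<k-1} \<subseteq> UNIV - {i0,j0}"
    using exists_g[OF kn ij0[symmetric]] by blast
  have o: "orthonormal k (fam (axis i0 1) g)" by (rule fam_orth[OF g axis_unit axis_off])
  have "0 = (\<Sum>a<k. cinner (fam (axis i0 1) g a) (W *v fam (axis i0 1) g a))" using S0[OF o] by simp
  also have "... = cinner (axis i0 1) (W *v axis i0 1) + (\<Sum>m<k-1. cinner (axis (g m) 1) (W *v axis (g m) 1))"
    by (rule fam_sum[OF k1])
  also have "... = W $ i0 $ i0 + (\<Sum>m<k-1. W $ i0 $ i0)"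
  proof -
    have "(\<Sum>m<k-1. cinner (axis (g m) 1) (W *v axis (g m) 1)) = (\<Sum>m<k-1. W $ i0 $ i0)"
      by (intro sum.cong refl) (metis cinner_axis_left mv_axis dc)
    then show ?thesis by (simp add: cinner_axis_left mv_axis)
  qed
  also have "... = of_nat k * W $ i0 $ i0"
  proof -
    have h: "of_nat k = (1::complex) + of_nat (k - 1)" using k1 by (simp add: of_nat_diff)
    have "(\<Sum>m<k-1. W $ i0 $ i0) = of_nat (k - 1) * W $ i0 $ i0" by simp
    then show ?thesis unfolding h by (simp add: distrib_right)
  qed
  finally have "W $ i0 $ i0 = 0" using k1 by simp
  then show ?thesis unfolding vec_eq_iff
    by (metis dc off zero_index)
qed

lemma two_proj:
  assumes k1: "1 \<le> k" and kn: "k < CARD('n)"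
  shows "\<exists>Q1 Q2 :: complex^'n^'n. is_proj k Q1 \<and> is_proj k Q2 \<and> Q1 \<noteq> Q2"
proof -
  obtain i :: 'n where True by simp
  have n2: "2 \<le> CARD('n)" using k1 kn by simp
  obtain j where ij: "i \<noteq> j" using exists_other[OF n2] by metis
  obtain g where g: "inj_on g {..<k-1}" "g ` {..<k-1} \<subseteq> UNIV - {i,j}"
    using exists_g[OF kn ij] by blast
  have o1: "orthonormal k (fam (axis i 1) g)" by (rule fam_orth[OF g axis_unit axis_off])
  have o2: "orthonormal k (fam (axis j 1) g)" by (rule fam_orth[OF g axis_unit axis_off2])
  have p2: "\<forall>b<k. cinner (fam (axis j 1) g b) (axis i 1) = 0"
    by (rule fam_perp[OF g(2) _ axis_off]) (use ij in \<open>simp add: cinner_axis_left axis_comp\<close>)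
  have "projf k (fam (axis i 1) g) *v axis i 1 = axis i 1"
    using projf_fix[OF o1, of 0] k1 by (simp add: fam_def)
  moreover have "projf k (fam (axis j 1) g) *v axis i 1 = 0" by (rule projf_perp[OF p2])
  moreover have "axis i (1::complex) \<noteq> 0" by simp
  ultimately have "projf k (fam (axis i 1) g) \<noteq> projf k (fam (axis j 1) g)" by metis
  then show ?thesis using projf_is_proj[OF o1] projf_is_proj[OF o2] by blast
qed



definition Hp :: "complex^'n^'n \<Rightarrow> complex^'n^'n" where
  "Hp M = (1/2) *\<^sub>R (M + cadj M)"

lemma Hp_add: "Hp (M + N) = Hp M + Hp N"
  by (simp add: Hp_def cadj_add algebra_simps)
lemma Hp_scaleR: "Hp (c *\<^sub>R M) = c *\<^sub>R Hp M"
  by (simp add: Hp_def cadj_scaleR algebra_simps)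
lemma Hp_neg: "Hp (- M) = - Hp M"
  by (simp add: Hp_def cadj_def vec_eq_iff algebra_simps)
lemma Hp_sum: "Hp (sum f S) = (\<Sum>a\<in>S. Hp (f a))"
  by (induct S rule: infinite_finite_induct) (auto simp: Hp_add, simp_all add: Hp_def cadj_def vec_eq_iff)
lemma Hp_cadj: "Hp (cadj M) = Hp M"
  by (simp add: Hp_def algebra_simps)
lemma Hp_herm: "X \<in> Herm \<Longrightarrow> Hp X = X"
  by (simp add: Hp_def Herm_def scaleR_2[symmetric])

lemma outer_add_left: "outer (x + y) z = outer x z + outer y z"
  by (simp add: vec_eq_iff outer_def algebra_simps)
lemma outer_sum_left: "outer (sum f S) z = (\<Sum>a\<in>S. outer (f a) z)"
  by (induct S rule: infinite_finite_induct) (auto simp: outer_add_left, simp_all add: outer_def vec_eq_iff)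
lemma outer_scaleR_left: "outer (c *\<^sub>R x) z = c *\<^sub>R outer x z"
  by (simp add: vec_eq_iff outer_def)
lemma outer_smult_right: "outer x (c *s y) = outer (cnj c *s x) y"
  by (simp add: vec_eq_iff outer_def mult_ac)
lemma smult_split: "(c::complex) *s x = Re c *\<^sub>R x + Im c *\<^sub>R (\<i> *s x)"
  by (simp add: vec_eq_iff complex_eq_iff algebra_simps)

definition Gset :: "nat \<Rightarrow> (nat \<Rightarrow> complex^'n) \<Rightarrow> (complex^'n^'n) set" where
  "Gset m u = (\<lambda>(a,b). if a \<le> b then Hp (outer (u a) (u b)) else Hp (outer (\<i> *s u a) (u b))) ` ({..<m} \<times> {..<m})"

lemma Gset_card: "finite (Gset m u)" "card (Gset m u) \<le> m^2"
proof -
  show "finite (Gset m u)" by (simp add: Gset_def)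
  have "card (Gset m u) \<le> card ({..<m} \<times> {..<m})" unfolding Gset_def by (rule card_image_le) simp
  then show "card (Gset m u) \<le> m^2" by (simp add: power2_eq_square)
qed

lemma Hp_E_span: assumes "a < m" "b < m" shows "Hp (outer (u a) (u b)) \<in> span (Gset m u)"
proof (cases "a \<le> b")
  case True
  then have "Hp (outer (u a) (u b)) \<in> Gset m u" using assms unfolding Gset_def
    by (intro image_eqI[where x="(a,b)"]) auto
  then show ?thesis by (rule span_base)
next
  case False
  have "Hp (outer (u a) (u b)) = Hp (outer (u b) (u a))" using Hp_cadj[of "outer _ _"] cadj_outer by metis
  moreover have "Hp (outer (u b) (u a)) \<in> Gset m u" using assms False unfolding Gset_def
    by (intro image_eqI[where x="(b,a)"]) auto
  ultimately show ?thesis by (simp add: span_base)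
qed

lemma Hp_iE_span: assumes "a < m" "b < m" shows "Hp (outer (\<i> *s u a) (u b)) \<in> span (Gset m u)"
proof -
  have swap: "Hp (outer (\<i> *s u a) (u b)) = - Hp (outer (\<i> *s u b) (u a))"
  proof -
    have "Hp (outer (\<i> *s u a) (u b)) = Hp (outer (u b) (\<i> *s u a))" using Hp_cadj[of "outer _ _"] cadj_outer by metis
    also have "outer (u b) (\<i> *s u a) = (-1) *\<^sub>R outer (\<i> *s u b) (u a)"
      by (simp add: outer_smult_right vec_eq_iff outer_def)
    finally show ?thesis by (simp add: Hp_neg)
  qed
  consider "a > b" | "a < b" | "a = b" by linarith
  then show ?thesis
  proof cases
    case 1
    then have "Hp (outer (\<i> *s u a) (u b)) \<in> Gset m u" using assms unfolding Gset_def
      by (intro image_eqI[where x="(a,b)"]) auto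
    then show ?thesis by (rule span_base)
  next
    case 2
    then have "Hp (outer (\<i> *s u b) (u a)) \<in> Gset m u" using assms unfolding Gset_def
      by (intro image_eqI[where x="(b,a)"]) auto
    then show ?thesis unfolding swap by (intro span_neg span_base)
  next
    case 3
    then have h: "Hp (outer (\<i> *s u a) (u a)) = - Hp (outer (\<i> *s u a) (u a))" using swap by simp
    then have "(2::real) *\<^sub>R Hp (outer (\<i> *s u a) (u a)) = 0"
      by (metis scaleR_2 eq_neg_iff_add_eq_0)
    then have "Hp (outer (\<i> *s u a) (u b)) = 0" using 3 by simp
    then show ?thesis by (simp add: span_zero)
  qed
qed

lemma block_expand: "projf m u ** X ** projf m u =
   (\<Sum>b<m. \<Sum>a<m. outer (cinner (u a) (X *v u b) *s u a) (u b))"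
proof -
  have "projf m u ** X ** projf m u = (\<Sum>b<m. (projf m u ** X) ** outer (u b) (u b))"
    by (simp add: projf_def[of m u] matrix_mult_sum_right)
  also have "... = (\<Sum>b<m. outer (projf m u *v (X *v u b)) (u b))"
    by (simp add: mult_outer matrix_vector_mul_assoc)
  also have "... = (\<Sum>b<m. \<Sum>a<m. outer (cinner (u a) (X *v u b) *s u a) (u b))"
    by (simp add: projf_vec outer_sum_left)
  finally show ?thesis .
qed

lemma block_span: "Hp (projf m u ** X ** projf m u) \<in> span (Gset m u)"
proof -
  have "Hp (projf m u ** X ** projf m u) =
     (\<Sum>b<m. \<Sum>a<m. Hp (outer (cinner (u a) (X *v u b) *s u a) (u b)))"
    unfolding block_expand by (simp add: Hp_sum)
  also have "... \<in> span (Gset m u)"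
  proof (intro span_sum)
    fix a b assume "b \<in> {..<m}" "a \<in> {..<m}"
    then have ab: "a < m" "b < m" by auto
    define c where "c = cinner (u a) (X *v u b)"
    have "Hp (outer (c *s u a) (u b)) = Re c *\<^sub>R Hp (outer (u a) (u b)) + Im c *\<^sub>R Hp (outer (\<i> *s u a) (u b))"
      by (subst smult_split) (simp add: outer_add_left outer_scaleR_left Hp_add Hp_scaleR)
    also have "... \<in> span (Gset m u)"
      by (intro span_add span_scale Hp_E_span Hp_iE_span ab)
    finally show "Hp (outer (cinner (u a) (X *v u b) *s u a) (u b)) \<in> span (Gset m u)" unfolding c_def .
  qed
  finally show ?thesis .
qed



lemma trace_cadj: "trace (cadj M) = cnj (trace M)"
  by (simp add: trace_def cadj_def)

lemma trace_herm_real: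
  assumes "X \<in> Herm" "cadj Q = Q"
  shows "trace (X ** Q) = complex_of_real (Re (trace (X ** Q)))"
proof -
  have "cnj (trace (X ** Q)) = trace (Q ** X)"
    using assms by (simp add: trace_cadj[symmetric] cadj_mult Herm_def)
  also have "... = trace (X ** Q)" by (rule trace_comm)
  finally show ?thesis by (simp add: complex_eq_iff)
qed

lemma trace_scaleR: "trace (c *\<^sub>R M) = complex_of_real c * trace (M::complex^'n^'n)"
  unfolding trace_def vector_scaleR_component by (simp add: sum_distrib_left scaleR_conv_of_real)

lemma trace_lin: "trace ((a *\<^sub>R X + b *\<^sub>R Y) ** P) =
    complex_of_real a * trace (X ** P) + complex_of_real b * trace (Y ** (P::complex^'n^'n))"
  by (simp add: matrix_add_rdistrib scalar_matrix_assoc[symmetric] trace_add trace_scaleR)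

lemma matrix_diff_rdistrib: "(A - B) ** M = A ** M - B ** (M::complex^'n^'n)"
  by (simp add: vec_eq_iff matrix_matrix_mult_def sum_subtractf algebra_simps)
lemma matrix_diff_ldistrib: "M ** (A - B) = M ** A - M ** (B::complex^'n^'n)"
  by (simp add: vec_eq_iff matrix_matrix_mult_def sum_subtractf algebra_simps)
lemma mat1_minus_left: "(mat 1 - P) ** M = M - P ** (M::complex^'n^'n)"
  by (simp add: matrix_diff_rdistrib)
lemma mat1_minus_right: "M ** (mat 1 - P) = M - M ** (P::complex^'n^'n)"
  by (simp add: matrix_diff_ldistrib)
lemma trace_mat1: "trace (mat 1 :: complex^'n^'n) = of_nat CARD('n)"
  by (simp add: trace_def mat_def)
lemma trace_diff: "trace (A - B) = trace A - trace (B::complex^'n^'n)"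
  by (simp add: trace_def sum_subtractf)

lemma compl_proj:
  fixes P :: "complex^'n^'n"
  assumes "is_proj k P" "k \<le> CARD('n)"
  shows "is_proj (CARD('n) - k) (mat 1 - P)"
proof -
  have H: "cadj P = P" and I: "P ** P = P" and T: "trace P = of_nat k" using assms(1) by (auto simp: is_proj_def)
  have "(mat 1 - P) ** (mat 1 - P) = mat 1 - P"
    by (simp add: mat1_minus_left mat1_minus_right I)
  moreover have "cadj (mat 1 - P) = mat 1 - P" by (simp add: cadj_diff H)
  moreover have "trace (mat 1 - P) = of_nat (CARD('n) - k)"
    using assms(2) by (simp add: trace_diff trace_mat1 T of_nat_diff)
  ultimately show ?thesis by (simp add: is_proj_def)
qed



theorem mainTheorem12:
  fixes A P :: "complex^'n^'n" and k :: nat and C :: "(complex^'n^'n) set"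
  assumes "1 \<le> k" and "k < CARD('n)"
    and "A \<in> Herm"
    and "is_proj k P" and "cmod (trace (A ** P)) = wk k A"
    and "\<forall>Q. is_proj k Q \<and> cmod (trace (A ** Q)) = wk k A \<longrightarrow> Q = P"
    and "trace (A ** P) = complex_of_real (wk k A)"
    and "convex_cone_set C"
    and "dim C \<ge> k^2 + (CARD('n) - k)^2"
    and "A \<in> C" and "C \<subseteq> PH k A"
  shows "C \<subseteq> SH k P \<and> dim C = k^2 + (CARD('n) - k)^2"
proof -
  note k1 = assms(1) and kn = assms(2) and AH = assms(3) and Pp = assms(4) and uniq = assms(6)
    and trP = assms(7) and cc = assms(8) and dimC = assms(9) and AC = assms(10) and CPH = assms(11)
  have CH: "X \<in> Herm" if "X \<in> C" for X using CPH that by (auto simp: PH_def)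
  have PHm: "cadj P = P" using Pp by (simp add: is_proj_def)
  define f where "f X = Re (trace (X ** P))" for X
  have ftr: "trace (X ** P) = complex_of_real (f X)" if "X \<in> Herm" for X
    unfolding f_def by (rule trace_herm_real[OF that PHm])
  have flin: "f (a *\<^sub>R X + b *\<^sub>R Y) = a * f X + b * f Y" for a b X Y
    unfolding f_def trace_lin by simp
  have cone: "a *\<^sub>R X + b *\<^sub>R Y \<in> C" if "X \<in> C" "Y \<in> C" "a \<ge> 0" "b \<ge> 0" for a b X Y
    using cc that unfolding convex_cone_set_def by blast
  have wk0: "wk k X \<ge> 0" for X :: "complex^'n^'n" by (rule wk_nonneg[OF Pp])
  have wA: "wk k A > 0"
  proof (rule ccontr)
    assume "\<not> wk k A > 0"
    then have w0: "wk k A = 0" using wk0[of A] by simp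
    obtain Q1 Q2 :: "complex^'n^'n" where Q: "is_proj k Q1" "is_proj k Q2" "Q1 \<noteq> Q2"
      using two_proj[OF k1 kn] by blast
    have "cmod (trace (A ** Q1)) = wk k A" using wk_ge[OF Q(1), of A] w0 by simp
    then have "Q1 = P" using uniq Q(1) by blast
    moreover have "cmod (trace (A ** Q2)) = wk k A" using wk_ge[OF Q(2), of A] w0 by simp
    then have "Q2 = P" using uniq Q(2) by blast
    ultimately show False using Q(3) by simp
  qed
  have fA: "f A = wk k A" unfolding f_def using trP by simp
  have step1: "\<bar>f X\<bar> = wk k X" if XC: "X \<in> C" for X
  proof -
    have "par k X A" using CPH XC by (auto simp: PH_def)
    then obtain \<mu> :: real where mu: "\<mu> \<in> {1, -1}" and eq: "wk k (X + \<mu> *\<^sub>R A) = wk k X + wk k A"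
      unfolding par_def by blast
    obtain Q where Q: "is_proj k Q" "cmod (trace ((X + \<mu> *\<^sub>R A) ** Q)) = wk k (X + \<mu> *\<^sub>R A)"
      using wk_attained[OF Pp] by blast
    have "trace ((X + \<mu> *\<^sub>R A) ** Q) = complex_of_real 1 * trace (X ** Q) + complex_of_real \<mu> * trace (A ** Q)"
      using trace_lin[of 1 X \<mu> A Q] by simp
    then have "cmod (trace ((X + \<mu> *\<^sub>R A) ** Q)) \<le> cmod (trace (X ** Q)) + cmod (trace (A ** Q))"
      using mu by (auto intro: order_trans[OF norm_triangle_ineq] simp: norm_mult)
    moreover have "cmod (trace (X ** Q)) \<le> wk k X" "cmod (trace (A ** Q)) \<le> wk k A"
      using wk_ge[OF Q(1)] by auto
    ultimately have "cmod (trace (A ** Q)) = wk k A" "cmod (trace (X ** Q)) = wk k X"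
      using Q(2) eq by linarith+
    moreover have "Q = P" using uniq Q(1) calculation(1) by blast
    ultimately have "cmod (trace (X ** P)) = wk k X" by simp
    then show ?thesis using ftr[OF CH[OF XC]] by simp
  qed
  have zero: "X = 0" if "X \<in> C" "f X = 0" for X
  proof -
    have "wk k X = 0" using step1[OF that(1)] that(2) by simp
    then show ?thesis by (rule wk_zero[OF Pp k1 kn CH[OF that(1)]])
  qed
  have step2: "f X \<ge> 0" if XC: "X \<in> C" for X
  proof (rule ccontr)
    assume "\<not> f X \<ge> 0"
    then have fX: "f X < 0" by simp
    define t0 where "t0 = wk k A / (- f X)"
    have t0: "t0 > 0" unfolding t0_def using wA fX by (intro divide_pos_pos) auto
    have WC: "1 *\<^sub>R A + t0 *\<^sub>R X \<in> C" by (rule cone[OF AC XC]) (use t0 in auto)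
    have "f (1 *\<^sub>R A + t0 *\<^sub>R X) = wk k A + t0 * f X" using flin[of 1 A t0 X] fA by simp
    also have "... = 0" unfolding t0_def using fX by (simp add: field_simps)
    finally have "1 *\<^sub>R A + t0 *\<^sub>R X = 0" by (rule zero[OF WC])
    then have tX: "t0 *\<^sub>R X = - A" by (simp add: eq_neg_iff_add_eq_0 add.commute)
    have mA: "- A \<in> C" using cone[OF XC XC, of 0 t0] t0 tX by simp
    have sp: "C \<subseteq> span {A}"
    proof
      fix Z assume ZC: "Z \<in> C"
      define s0 where "s0 = f Z / wk k A"
      have ZC': "1 *\<^sub>R Z + (- s0) *\<^sub>R A \<in> C"
      proof (cases "s0 \<ge> 0")
        case True
        have "1 *\<^sub>R Z + s0 *\<^sub>R (- A) \<in> C" by (rule cone[OF ZC mA]) (use True in auto)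
        then show ?thesis by simp
      next
        case False
        show ?thesis by (rule cone[OF ZC AC]) (use False in auto)
      qed
      have "f (1 *\<^sub>R Z + (- s0) *\<^sub>R A) = f Z - s0 * wk k A" using flin[of 1 Z "- s0" A] fA by simp
      also have "... = 0" unfolding s0_def using wA by simp
      finally have "1 *\<^sub>R Z + (- s0) *\<^sub>R A = 0" by (rule zero[OF ZC'])
      then have "Z = s0 *\<^sub>R A" by (simp add: algebra_simps)
      then show "Z \<in> span {A}" by (simp add: span_scale span_base)
    qed
    have "dim C \<le> card {A}" by (rule dim_le_card[OF sp]) simp
    moreover have "k^2 + (CARD('n) - k)^2 \<ge> 2"
    proof -
      have "k^2 \<ge> 1" using k1 by simp
      moreover have "(CARD('n) - k)^2 \<ge> 1" using kn by simp
      ultimately show ?thesis by linarith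
    qed
    ultimately show False using dimC by simp
  qed
  have SHC: "C \<subseteq> SH k P"
  proof
    fix X assume XC: "X \<in> C"
    have "trace (X ** P) = complex_of_real (wk k X)"
      using ftr[OF CH[OF XC]] step1[OF XC] step2[OF XC] by simp
    then show "X \<in> SH k P" using CH[OF XC] by (simp add: SH_def)
  qed
  obtain u where ou: "orthonormal k u" and Pu: "P = projf k u" using proj_basis[OF Pp] by blast
  define m where "m = CARD('n) - k"
  define P' where "P' = mat 1 - P"
  have P'p: "is_proj m P'" unfolding P'_def m_def by (rule compl_proj[OF Pp]) (use kn in simp)
  obtain v where ov: "orthonormal m v" and P'v: "P' = projf m v" using proj_basis[OF P'p] by blast
  have P'H: "cadj P' = P'" using P'p by (simp add: is_proj_def)
  have Pv0: "P *v v b = 0" if "b < m" for b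
  proof -
    have "P' *v v b = v b" unfolding P'v by (rule projf_fix[OF ov that])
    then show ?thesis unfolding P'_def by (simp add: matrix_vector_mult_diff_rdistrib)
  qed
  have perp: "cinner (u a) (v b) = 0" if "a < k" "b < m" for a b
  proof -
    have "cinner (u a) (P *v v b) = cinner (cadj P *v u a) (v b)" by (rule cinner_adj)
    then show ?thesis using Pv0[OF that(2)] PHm projf_fix[OF ou that(1)] Pu by simp
  qed
  have inspan: "X \<in> span (Gset k u \<union> Gset m v)" if XC: "X \<in> C" for X
  proof -
    have XH: "X \<in> Herm" by (rule CH[OF XC])
    have XS: "trace (X ** P) = complex_of_real (wk k X)" using SHC XC by (auto simp: SH_def)
    have mx: "\<forall>u'. orthonormal k u' \<longrightarrow>
        Re (\<Sum>b<k. cinner (u' b) (X *v u' b)) \<le> Re (\<Sum>b<k. cinner (u b) (X *v u b))"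
    proof (intro allI impI)
      fix u' :: "nat \<Rightarrow> complex^'n" assume ou': "orthonormal k u'"
      have "Re (\<Sum>b<k. cinner (u' b) (X *v u' b)) = Re (trace (X ** projf k u'))" by (simp add: trace_projf)
      also have "... \<le> cmod (trace (X ** projf k u'))" by (rule complex_Re_le_cmod)
      also have "... \<le> wk k X" by (rule wk_ge[OF projf_is_proj[OF ou']])
      also have "... = Re (trace (X ** P))" using XS by simp
      also have "... = Re (\<Sum>b<k. cinner (u b) (X *v u b))" by (simp add: Pu trace_projf)
      finally show "Re (\<Sum>b<k. cinner (u' b) (X *v u' b)) \<le> Re (\<Sum>b<k. cinner (u b) (X *v u b))" .
    qed
    have z: "cinner (u a) (X *v v b) = 0" if "a < k" "b < m" for a b
    proof (rule core[OF XH ou that(1) _ _ mx])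
      show "cinner (v b) (v b) = 1" using ov that(2) by (simp add: orthonormal_def)
      show "\<forall>c<k. cinner (u c) (v b) = 0" using perp that(2) by blast
    qed
    have PXP': "P ** X ** P' = 0"
    proof -
      have "P ** X ** P' = (\<Sum>b<m. (P ** X) ** outer (v b) (v b))"
        by (simp add: P'v projf_def[of m v] matrix_mult_sum_right)
      also have "... = (\<Sum>b<m. outer (P *v (X *v v b)) (v b))"
        by (simp add: mult_outer matrix_vector_mul_assoc)
      also have "... = 0"
      proof (intro sum.neutral ballI)
        fix b assume "b \<in> {..<m}"
        then have "P *v (X *v v b) = 0" unfolding Pu projf_vec using z by simp
        then show "outer (P *v (X *v v b)) (v b) = 0" by (simp add: outer_def vec_eq_iff)
      qed
      finally show ?thesis .
    qed
    have P'XP: "P' ** X ** P = 0"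
    proof -
      have "cadj (P ** X ** P') = cadj P' ** cadj X ** cadj P" by (simp add: cadj_mult matrix_mul_assoc)
      then have "P' ** X ** P = cadj (P ** X ** P')" using P'H PHm XH by (simp add: Herm_def)
      then show ?thesis using PXP' by (simp add: cadj_def vec_eq_iff)
    qed
    have sumI: "P + P' = mat 1" unfolding P'_def by simp
    have "X = (P + P') ** X ** (P + P')" unfolding sumI by simp
    also have "... = P ** X ** P + P ** X ** P' + (P' ** X ** P + P' ** X ** P')"
      by (simp add: matrix_add_rdistrib matrix_add_ldistrib)
    finally have Xd: "X = P ** X ** P + P' ** X ** P'" using PXP' P'XP by simp
    have "X = Hp X" using Hp_herm[OF XH] by simp
    also have "... = Hp (P ** X ** P) + Hp (P' ** X ** P')" by (subst Xd) (simp add: Hp_add)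
    also have "... \<in> span (Gset k u \<union> Gset m v)"
    proof (rule span_add)
      show "Hp (P ** X ** P) \<in> span (Gset k u \<union> Gset m v)"
        using block_span[of k u X] span_mono[of "Gset k u" "Gset k u \<union> Gset m v"] Pu by auto
      show "Hp (P' ** X ** P') \<in> span (Gset k u \<union> Gset m v)"
        using block_span[of m v X] span_mono[of "Gset m v" "Gset k u \<union> Gset m v"] P'v by auto
    qed
    finally show ?thesis .
  qed
  have "dim C \<le> card (Gset k u \<union> Gset m v)"
    by (rule dim_le_card) (use inspan Gset_card in auto)
  also have "... \<le> card (Gset k u) + card (Gset m v)" by (rule card_Un_le)
  also have "... \<le> k^2 + m^2" using Gset_card[of k u] Gset_card[of m v] by linarith
  finally have "dim C \<le> k^2 + (CARD('n) - k)^2" unfolding m_def .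
  then show ?thesis using SHC dimC by simp
qed


end
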